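(* Let $I\subseteq[0,\infty)$ be an interval, let $f:I\to\mathbb{R}$ be twice differentiable on $I^\circ$, and let $a,b\in I^\circ$ with $a<b$ such that $f''\in L^1[a,b]$. Let $q>1$ and $p=\frac{q}{q-1}$. If $|f''|^q$ is quasi-convex on $[a,b]$, then $$\left|\frac{f(a)+f(b)}{2}-\frac{1}{b-a}\int_a^b f(x)\,dx\right|\le \frac{(b-a)^2}{2^{1+\frac1q}}\bigl(\beta(2,p+1)\bigr)^{\frac1p}\left(\max\{|f''(a)|^q,|f''(b)|^q\}\right)^{\frac1q}.$$
   Context: A function $g:[a,b]\to\mathbb{R}$ is quasi-convex on $[a,b]$ if $g(\lambda x+(1-\lambda)y)\le\max\{g(x),g(y)\}$ for all $x,y\in[a,b]$ and $\lambda\in[0,1]$. $\beta(x,y)=\int_0^1 t^{x-1}(1-t)^{y-1}\,dt$ for $x,y>0$. *)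

theory Defs
  imports "HOL-Analysis.Analysis"
begin

definition quasiconvex_on :: "real set \<Rightarrow> (real \<Rightarrow> real) \<Rightarrow> bool" where
  "quasiconvex_on S g \<longleftrightarrow>
     (\<forall>x\<in>S. \<forall>y\<in>S. \<forall>t::real. 0 \<le> t \<and> t \<le> 1 \<longrightarrow>
        g (t * x + (1 - t) * y) \<le> max (g x) (g y))"

definition beta_fn :: "real \<Rightarrow> real \<Rightarrow> real" where
  "beta_fn x y = integral {0..1} (\<lambda>t. t powr (x - 1) * (1 - t) powr (y - 1))"

end

theory Submission
  imports Defs
begin

lemma trap_convex:
  fixes g g' g'' :: "real \<Rightarrow> real" and a b J :: real
  assumes ab: "a < b"
    and d1: "\<And>x. x \<in> {a..b} \<Longrightarrow> (g has_real_derivative g' x) (at x)"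
    and d2: "\<And>x. x \<in> {a..b} \<Longrightarrow> (g' has_real_derivative g'' x) (at x)"
    and nn: "\<And>x. x \<in> {a..b} \<Longrightarrow> g'' x \<ge> 0"
    and gi: "(g has_integral J) {a..b}"
  shows "J \<le> (b - a) * (g a + g b) / 2"
proof -
  have cv: "convex_on {a..b} g"
  proof (rule convex_on_realI[OF _ d1])
    show "connected {a..b}" by simp
    fix x y assume "x \<in> {a..b}" "y \<in> {a..b}" "x \<le> y"
    then show "g' x \<le> g' y"
      by (intro DERIV_nonneg_imp_nondecreasing[OF \<open>x\<le>y\<close>]) (metis atLeastAtMost_iff d2 nn order_trans)
  qed
  define L where "L x = g a + (g b - g a) * (x - a) / (b - a)" for x
  have le: "g x \<le> L x" if x: "x \<in> {a..b}" for x
  proof -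
    define t where "t = (x - a) / (b - a)"
    have t0: "t \<ge> 0" "t \<le> 1" using x ab by (auto simp: t_def field_simps)
    have tb: "t * (b - a) = x - a" using ab by (simp add: t_def)
    have xe: "x = (1 - t) *\<^sub>R a + t *\<^sub>R b" using tb by (simp add: algebra_simps)
    have "g x \<le> (1 - t) * g a + t * g b"
      unfolding xe by (rule convex_onD[OF cv]) (use t0 ab in auto)
    also have "\<dots> = g a + (g b - g a) * t" by (simp add: algebra_simps)
    also have "\<dots> = L x" by (simp add: L_def t_def)
    finally show ?thesis .
  qed
  define c where "c = (g b - g a) / (2 * (b - a))"
  define F where "F x = g a * x + c * (x - a)^2" for x
  have Li: "(L has_integral (F b - F a)) {a..b}"
  proof (rule fundamental_theorem_of_calculus)
    show "a \<le> b" using ab by simp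
    fix x assume "x \<in> {a..b}"
    have "(F has_real_derivative (g a + c * (2 * (x - a)))) (at x)"
      unfolding F_def by (auto intro!: derivative_eq_intros simp: power2_eq_square algebra_simps)
    moreover have "g a + c * (2 * (x - a)) = L x"
      using ab by (simp add: L_def c_def field_simps)
    ultimately show "(F has_vector_derivative L x) (at x within {a..b})"
      by (simp add: has_real_derivative_iff_has_vector_derivative[symmetric] has_field_derivative_at_within)
  qed
  have "J \<le> F b - F a"
    by (rule has_integral_le[OF gi Li]) (use le in auto)
  also have "\<dots> = (b - a) * (g a + g b) / 2"
    using ab by (simp add: F_def c_def field_simps power2_eq_square)
  finally show ?thesis .
qed

lemma beta_val:
  fixes p :: real assumes p: "p > 0"
  shows "beta_fn 2 (p + 1) = 1 / ((p + 1) * (p + 2))"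
proof -
  define F where "F t = (1 - t) powr (p + 2) / (p + 2) - (1 - t) powr (p + 1) / (p + 1)" for t
  have "((\<lambda>t. t powr (2 - 1) * (1 - t) powr (p + 1 - 1)) has_integral (F 1 - F 0)) {0..1}"
  proof (rule fundamental_theorem_of_calculus_interior)
    show "continuous_on {0..1} F" unfolding F_def
      using p by (intro continuous_intros continuous_on_powr') auto
    fix x :: real assume x: "x \<in> {0<..<1}"
    have "(F has_real_derivative
       ((p + 2) * (1 - x) powr (p + 2 - 1) * (-1) / (p + 2) - (p + 1) * (1 - x) powr (p + 1 - 1) * (-1) / (p + 1))) (at x)"
    proof -
      have d: "((\<lambda>t. (1 - t) powr r) has_real_derivative r * (1 - x) powr (r - 1) * (-1)) (at x)" for r
        using DERIV_fun_powr[of "\<lambda>t. 1 - t" "-1" x r] x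
        by (auto intro!: derivative_eq_intros)
      show ?thesis unfolding F_def
        by (intro DERIV_diff DERIV_cdivide d)
    qed
    moreover have "((p + 2) * (1 - x) powr (p + 2 - 1) * (-1) / (p + 2) - (p + 1) * (1 - x) powr (p + 1 - 1) * (-1) / (p + 1))
        = x powr (2 - 1) * (1 - x) powr (p + 1 - 1)"
    proof -
      have h1: "(1 - x) powr (p + 2 - 1) = (1 - x) powr p * (1 - x)"
        using x by (simp add: powr_add add_ac)
      have h2: "(1 - x) powr (p + 1 - 1) = (1 - x) powr p" by simp
      have h3: "x powr (2 - 1) = x" using x by simp
      have pp: "p + 2 \<noteq> 0" "p + 1 \<noteq> 0" "1 + p \<noteq> 0" "2 + p \<noteq> 0" "p * p + (2 + p * 3) \<noteq> 0"
        using p by (auto simp: add_pos_pos) (smt (verit) mult_pos_pos)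
      show ?thesis unfolding h1 h2 h3 using pp
        by (simp add: field_simps)
    qed
    ultimately show "(F has_vector_derivative x powr (2 - 1) * (1 - x) powr (p + 1 - 1)) (at x)"
      by (simp add: has_real_derivative_iff_has_vector_derivative[symmetric])
  qed auto
  moreover have "F 1 - F 0 = 1 / ((p + 1) * (p + 2))"
    using p by (simp add: F_def field_simps)
  ultimately show ?thesis unfolding beta_fn_def
    by (metis integral_unique)
qed

lemma three_pow:
  fixes p :: real assumes p: "p \<ge> 1"
  shows "(p + 1) * (p + 2) \<le> 2 * 3 powr p"
proof -
  define s where "s = p - 1"
  have s: "s \<ge> 0" using p by (simp add: s_def)
  have "3 powr p = 3 * 3 powr s" by (simp add: s_def powr_diff)
  have "3 powr s = exp (s * ln 3)" by (simp add: powr_def)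
  moreover have "exp s \<le> exp (s * ln 3)"
    using s ln3_gt_1 by (simp add: mult_left_mono[of 1 "ln 3" s, simplified])
  moreover have "exp s = exp (s/2)^2" by (simp add: power2_eq_square exp_add[symmetric])
  moreover have "(1 + s/2)^2 \<le> exp (s/2)^2"
    using s exp_ge_add_one_self[of "s/2"] by (intro power_mono) auto
  ultimately have "(1 + s/2)^2 \<le> 3 powr s" by linarith
  then have "6 * (1 + s/2)^2 \<le> 2 * 3 powr p" using \<open>3 powr p = 3 * 3 powr s\<close> by linarith
  moreover have "(p + 1) * (p + 2) \<le> 6 * (1 + s/2)^2"
  proof -
    have pe: "p = s + 1" by (simp add: s_def)
    have "6 * (1 + s/2)^2 - (p + 1) * (p + 2) = s^2/2 + s"
      unfolding pe by (simp add: power2_eq_square algebra_simps)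
    moreover have "s^2/2 + s \<ge> 0" using s by simp
    ultimately show ?thesis by linarith
  qed
  ultimately show ?thesis by linarith
qed


lemma lin_aux:
  fixes J Q A R T :: real
  shows "J + Q \<le> A + R \<Longrightarrow> Q - J \<le> R - A \<Longrightarrow> Q - R = - T \<Longrightarrow> \<bar>A - J\<bar> \<le> T"
  by linarith

theorem theorem2p3:
  fixes I :: "real set" and f f' f'' :: "real \<Rightarrow> real" and a b p q :: real
  assumes "is_interval I" and "I \<subseteq> {0..}"
    and "\<And>x. x \<in> interior I \<Longrightarrow> (f has_real_derivative f' x) (at x)"
    and "\<And>x. x \<in> interior I \<Longrightarrow> (f' has_real_derivative f'' x) (at x)"
    and "a \<in> interior I" and "b \<in> interior I" and "a < b"
    and "f'' absolutely_integrable_on {a..b}"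
    and "q > 1" and "p = q / (q - 1)"
    and "quasiconvex_on {a..b} (\<lambda>x. \<bar>f'' x\<bar> powr q)"
  shows "\<bar>(f a + f b) / 2 - (1 / (b - a)) * integral {a..b} f\<bar>
    \<le> (b - a)^2 / 2 powr (1 + 1 / q) * (beta_fn 2 (p + 1)) powr (1 / p)
       * (max (\<bar>f'' a\<bar> powr q) (\<bar>f'' b\<bar> powr q)) powr (1 / q)"
proof -
  note ab = \<open>a < b\<close>
  have q: "q > 1" by fact
  have pgt: "p > 1" unfolding \<open>p = q / (q - 1)\<close> using q by (subst less_divide_eq_1_pos) auto
  have pq: "1 / q = 1 - 1 / p" unfolding \<open>p = q / (q - 1)\<close> using q by (simp add: diff_divide_distrib)
  have sub: "{a..b} \<subseteq> interior I"
  proof -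
    have "convex (interior I)" using \<open>is_interval I\<close> by (simp add: is_interval_convex convex_interior)
    then have "closed_segment a b \<subseteq> interior I"
      using \<open>a \<in> interior I\<close> \<open>b \<in> interior I\<close> by (simp add: closed_segment_subset)
    then show ?thesis using ab by (simp add: closed_segment_eq_real_ivl)
  qed
  have D1: "\<And>x. x \<in> {a..b} \<Longrightarrow> (f has_real_derivative f' x) (at x)"
    using sub assms(3) by blast
  have D2: "\<And>x. x \<in> {a..b} \<Longrightarrow> (f' has_real_derivative f'' x) (at x)"
    using sub assms(4) by blast
  define K where "K = max \<bar>f'' a\<bar> \<bar>f'' b\<bar>"
  have K0: "K \<ge> 0" by (simp add: K_def)
  have maxK: "max (\<bar>f'' a\<bar> powr q) (\<bar>f'' b\<bar> powr q) = K powr q"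
  proof (cases "\<bar>f'' a\<bar> \<le> \<bar>f'' b\<bar>")
    case True
    then have "\<bar>f'' a\<bar> powr q \<le> \<bar>f'' b\<bar> powr q" using q by (intro powr_mono2) auto
    then show ?thesis using True by (simp add: K_def max_def)
  next
    case False
    then have "\<bar>f'' b\<bar> powr q \<le> \<bar>f'' a\<bar> powr q" using q by (intro powr_mono2) auto
    then show ?thesis using False by (simp add: K_def max_def)
  qed
  have Kb: "\<bar>f'' x\<bar> \<le> K" if x: "x \<in> {a..b}" for x
  proof (rule ccontr)
    assume "\<not> ?thesis"
    then have "K powr q < \<bar>f'' x\<bar> powr q" using q K0 by (intro powr_less_mono2) auto
    moreover
    define t where "t = (x - a) / (b - a)"
    have t0: "0 \<le> t" "t \<le> 1" using x ab by (auto simp: t_def field_simps)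
    have tb: "t * (b - a) = x - a" using ab by (simp add: t_def)
    have xe: "t * b + (1 - t) * a = x" using tb by (simp add: algebra_simps)
    have "\<bar>f'' x\<bar> powr q \<le> max (\<bar>f'' b\<bar> powr q) (\<bar>f'' a\<bar> powr q)"
      using assms(11) t0 ab unfolding quasiconvex_on_def
      by (metis (no_types, lifting) atLeastAtMost_iff order_less_imp_le order_refl xe)
    ultimately show False using maxK by (simp add: max.commute)
  qed
  have contf: "continuous_on {a..b} f"
    using D1 by (meson DERIV_isCont continuous_at_imp_continuous_on)
  define J where "J = integral {a..b} f"
  have fi: "(f has_integral J) {a..b}"
    unfolding J_def using contf integrable_continuous_interval by blast
  have sq: "((\<lambda>x. K / 2 * x^2) has_integral (K / 6 * b^3 - K / 6 * a^3)) {a..b}"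
  proof (rule fundamental_theorem_of_calculus)
    show "a \<le> b" using ab by simp
    fix x assume "x \<in> {a..b}"
    have "((\<lambda>x. K / 6 * x^3) has_real_derivative K / 2 * x^2) (at x)"
      by (auto intro!: derivative_eq_intros simp: power2_eq_square)
    then show "((\<lambda>x. K / 6 * x^3) has_vector_derivative K / 2 * x^2) (at x within {a..b})"
      by (simp add: has_real_derivative_iff_has_vector_derivative[symmetric] has_field_derivative_at_within)
  qed
  have h1: "J + (K / 6 * b^3 - K / 6 * a^3) \<le> (b - a) * ((f a + K / 2 * a^2) + (f b + K / 2 * b^2)) / 2"
  proof (rule trap_convex[where g = "\<lambda>x. f x + K / 2 * x^2" and g' = "\<lambda>x. f' x + K * x"
        and g'' = "\<lambda>x. f'' x + K", OF ab])
    fix x assume x: "x \<in> {a..b}"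
    show "((\<lambda>x. f x + K / 2 * x^2) has_real_derivative f' x + K * x) (at x)"
      using D1[OF x] by (auto intro!: derivative_eq_intros simp: power2_eq_square)
    show "((\<lambda>x. f' x + K * x) has_real_derivative f'' x + K) (at x)"
      using D2[OF x] by (auto intro!: derivative_eq_intros)
    show "f'' x + K \<ge> 0" using Kb[OF x] by linarith
  next
    show "((\<lambda>x. f x + K / 2 * x^2) has_integral J + (K / 6 * b^3 - K / 6 * a^3)) {a..b}"
      by (rule has_integral_add[OF fi sq])
  qed
  have h2: "(K / 6 * b^3 - K / 6 * a^3) - J \<le> (b - a) * ((K / 2 * a^2 - f a) + (K / 2 * b^2 - f b)) / 2"
  proof (rule trap_convex[where g = "\<lambda>x. K / 2 * x^2 - f x" and g' = "\<lambda>x. K * x - f' x"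
        and g'' = "\<lambda>x. K - f'' x", OF ab])
    fix x assume x: "x \<in> {a..b}"
    show "((\<lambda>x. K / 2 * x^2 - f x) has_real_derivative K * x - f' x) (at x)"
      using D1[OF x] by (auto intro!: derivative_eq_intros simp: power2_eq_square)
    show "((\<lambda>x. K * x - f' x) has_real_derivative K - f'' x) (at x)"
      using D2[OF x] by (auto intro!: derivative_eq_intros)
    show "K - f'' x \<ge> 0" using Kb[OF x] by linarith
  next
    show "((\<lambda>x. K / 2 * x^2 - f x) has_integral (K / 6 * b^3 - K / 6 * a^3) - J) {a..b}"
      by (rule has_integral_diff[OF sq fi])
  qed
  define X where "X = (b - a) * (f a + f b) / 2 - J"
  have E: "(K / 6 * b^3 - K / 6 * a^3) - (b - a) * (K / 2 * a^2 + K / 2 * b^2) / 2 = - (K * (b - a)^3 / 12)"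
    by (simp add: power2_eq_square power3_eq_cube field_simps)
  have e1: "(b - a) * ((f a + K / 2 * a^2) + (f b + K / 2 * b^2)) / 2
      = (b - a) * (f a + f b) / 2 + (b - a) * (K / 2 * a^2 + K / 2 * b^2) / 2"
    by (simp add: field_simps)
  have e2: "(b - a) * ((K / 2 * a^2 - f a) + (K / 2 * b^2 - f b)) / 2
      = (b - a) * (K / 2 * a^2 + K / 2 * b^2) / 2 - (b - a) * (f a + f b) / 2"
    by (simp add: field_simps)
  have Xb: "\<bar>X\<bar> \<le> K * (b - a)^3 / 12"
    unfolding X_def by (rule lin_aux[OF h1[unfolded e1] h2[unfolded e2] E])
  have LHS: "\<bar>(f a + f b) / 2 - (1 / (b - a)) * integral {a..b} f\<bar> \<le> K * (b - a)^2 / 12"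
  proof -
    have "(f a + f b) / 2 - (1 / (b - a)) * integral {a..b} f = X / (b - a)"
      using ab by (simp add: X_def J_def field_simps)
    also have "\<bar>X / (b - a)\<bar> \<le> (K * (b - a)^3 / 12) / (b - a)"
    proof -
      have "\<bar>X / (b - a)\<bar> = \<bar>X\<bar> / (b - a)" using ab by simp
      also have "\<dots> \<le> (K * (b - a)^3 / 12) / (b - a)"
        using ab by (intro divide_right_mono[OF Xb]) auto
      finally show ?thesis .
    qed
    also have "(K * (b - a)^3 / 12) / (b - a) = K * (b - a)^2 / 12"
      using ab by (simp add: power3_eq_cube power2_eq_square field_simps)
    finally show ?thesis .
  qed
  define B where "B = beta_fn 2 (p + 1)"
  have Bv: "B = 1 / ((p + 1) * (p + 2))" using beta_val pgt by (simp add: B_def)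
  have Bpos: "B > 0" using pgt by (simp add: Bv)
  have c1: "3 powr (- p) \<le> 2 * B"
  proof -
    have "(p + 1) * (p + 2) \<le> 2 * 3 powr p" using three_pow pgt by simp
    moreover have "(p + 1) * (p + 2) > 0" using pgt by simp
    ultimately show ?thesis using pgt
      by (simp add: Bv powr_minus field_simps)
  qed
  have c2: "1 / 3 \<le> (2 * B) powr (1 / p)"
  proof -
    have "(3 powr (- p)) powr (1 / p) \<le> (2 * B) powr (1 / p)"
      using c1 pgt by (intro powr_mono2) auto
    moreover have "(3 powr (- p)) powr (1 / p) = 1 / 3"
    proof -
      have "- p * (1 / p) = -1" using pgt by simp
      then show ?thesis by (simp only: powr_powr) (simp add: powr_minus)
    qed
    ultimately show ?thesis by simp
  qed
  have c3: "2 powr (1 + 1 / q) = 4 / 2 powr (1 / p)"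
    unfolding pq by (simp add: powr_diff powr_add)
  have c4: "1 / 12 \<le> B powr (1 / p) / 2 powr (1 + 1 / q)"
  proof -
    have "B powr (1 / p) / 2 powr (1 + 1 / q) = (2 * B) powr (1 / p) / 4"
      unfolding c3 using Bpos by (simp add: powr_mult)
    then show ?thesis using c2 by linarith
  qed
  have KK: "(K powr q) powr (1 / q) = K"
    using K0 q by (simp add: powr_powr)
  have "K * (b - a)^2 / 12 \<le> (K * (b - a)^2) * (B powr (1 / p) / 2 powr (1 + 1 / q))"
    using c4 K0 by (metis mult_left_mono zero_le_mult_iff zero_le_power2 times_divide_eq_right mult_1_right)
  also have "\<dots> = (b - a)^2 / 2 powr (1 + 1 / q) * (beta_fn 2 (p + 1)) powr (1 / p)
       * (max (\<bar>f'' a\<bar> powr q) (\<bar>f'' b\<bar> powr q)) powr (1 / q)"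
    unfolding maxK KK B_def by simp
  finally show ?thesis using LHS by linarith
qed

end
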